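(* Let $i:M\to N$ be a normal monomorphism of algebraic lattices (identify $M$ with $i(M)$) and $L$ an algebraic sub-lattice of $M$ with maximal element $1_L$. Let $\pi:M\to M/L$ and $\pi':N\to N/L$ be the maps $x\mapsto x\vee 1_L$, where $M/L=\{x\in M:x\ge1_L\}$ and $N/L=\{x\in N:x\ge 1_L\}$. Then $\pi,\pi'$ are normal epimorphisms, the induced map $i':M/L\to N/L$, $x\mapsto i(x)$, is a normal monomorphism, and the square with top $i$, left $\pi$, right $\pi'$, bottom $i'$ is both a pullback and a pushout in the category $\mathcal{L}$ of algebraic lattices.
   Context: An element $x$ of a complete lattice is compact if every cover $x\le\bigvee_{i\in I}y_i$ has a finite subcover. An algebraic lattice is a complete lattice in which every element is a join of compact elements. Morphisms in $\mathcal{L}$ preserve arbitrary joins and send compact elements to compact elements. A morphism $f:L_1\to L_2$ is a normal monomorphism if injective with downward closed image, and a normal epimorphism if there is $x_0\in L_1$ and an isomorphism $\varphi:\{y\in L_1:y\ge x_0\}\to L_2$ with $f(y)=\varphi(y\vee x_0)$. An algebraic sub-lattice of $M$ is a subset which is itself an algebraic lattice such that the inclusion is a normal monomorphism. *)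

theory Defs
  imports "HOL-Algebra.Complete_Lattice"
begin

definition compact_elem :: "'a gorder \<Rightarrow> 'a \<Rightarrow> bool" where
  "compact_elem L x \<longleftrightarrow> x \<in> carrier L \<and>
     (\<forall>Y. Y \<subseteq> carrier L \<longrightarrow> x \<sqsubseteq>\<^bsub>L\<^esub> \<Squnion>\<^bsub>L\<^esub> Y \<longrightarrow>
        (\<exists>F. finite F \<and> F \<subseteq> Y \<and> x \<sqsubseteq>\<^bsub>L\<^esub> \<Squnion>\<^bsub>L\<^esub> F))"

definition algebraic_lattice :: "'a gorder \<Rightarrow> bool" where
  "algebraic_lattice L \<longleftrightarrow> complete_lattice L \<and>
     (\<forall>x\<in>carrier L. \<exists>Y. Y \<subseteq> {c. compact_elem L c} \<and> x = \<Squnion>\<^bsub>L\<^esub> Y)"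

definition alg_morphism :: "'a gorder \<Rightarrow> 'b gorder \<Rightarrow> ('a \<Rightarrow> 'b) \<Rightarrow> bool" where
  "alg_morphism X Y f \<longleftrightarrow> algebraic_lattice X \<and> algebraic_lattice Y \<and>
     f \<in> carrier X \<rightarrow> carrier Y \<and> sup_pres X Y f \<and>
     (\<forall>c. compact_elem X c \<longrightarrow> compact_elem Y (f c))"

definition alg_iso :: "'a gorder \<Rightarrow> 'b gorder \<Rightarrow> ('a \<Rightarrow> 'b) \<Rightarrow> bool" where
  "alg_iso X Y f \<longleftrightarrow> alg_morphism X Y f \<and>
     (\<exists>g. alg_morphism Y X g \<and> (\<forall>x\<in>carrier X. g (f x) = x) \<and> (\<forall>y\<in>carrier Y. f (g y) = y))"

definition normal_mono :: "'a gorder \<Rightarrow> 'b gorder \<Rightarrow> ('a \<Rightarrow> 'b) \<Rightarrow> bool" where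
  "normal_mono X Y f \<longleftrightarrow> alg_morphism X Y f \<and> inj_on f (carrier X) \<and>
     (\<forall>y\<in>carrier Y. \<forall>x\<in>carrier X. y \<sqsubseteq>\<^bsub>Y\<^esub> f x \<longrightarrow> y \<in> f ` carrier X)"

definition upset :: "'a gorder \<Rightarrow> 'a \<Rightarrow> 'a gorder" where
  "upset L x0 = L\<lparr>carrier := {y \<in> carrier L. x0 \<sqsubseteq>\<^bsub>L\<^esub> y}\<rparr>"

definition normal_epi :: "'a gorder \<Rightarrow> 'b gorder \<Rightarrow> ('a \<Rightarrow> 'b) \<Rightarrow> bool" where
  "normal_epi X Y f \<longleftrightarrow> alg_morphism X Y f \<and>
     (\<exists>x0\<in>carrier X. \<exists>\<phi>. alg_iso (upset X x0) Y \<phi> \<and>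
        (\<forall>y\<in>carrier X. f y = \<phi> (y \<squnion>\<^bsub>X\<^esub> x0)))"

definition algebraic_sublattice :: "'a set \<Rightarrow> 'a gorder \<Rightarrow> bool" where
  "algebraic_sublattice S M \<longleftrightarrow> S \<subseteq> carrier M \<and>
     algebraic_lattice (M\<lparr>carrier := S\<rparr>) \<and> normal_mono (M\<lparr>carrier := S\<rparr>) M id"

text \<open>Commutative square  A --top--> B,  A --left--> C,  B --right--> D,  C --bot--> D.\<close>
definition is_pullback :: "'a gorder \<Rightarrow> 'b gorder \<Rightarrow> 'c gorder \<Rightarrow> 'd gorder \<Rightarrow>
   ('a \<Rightarrow> 'b) \<Rightarrow> ('a \<Rightarrow> 'c) \<Rightarrow> ('b \<Rightarrow> 'd) \<Rightarrow> ('c \<Rightarrow> 'd) \<Rightarrow> 'p itself \<Rightarrow> bool" where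
  "is_pullback A B C D t l r b (_ :: 'p itself) \<longleftrightarrow>
     (\<forall>x\<in>carrier A. r (t x) = b (l x)) \<and>
     (\<forall>(P :: 'p gorder) g h. alg_morphism P B g \<and> alg_morphism P C h \<and>
        (\<forall>x\<in>carrier P. r (g x) = b (h x)) \<longrightarrow>
        (\<exists>u. alg_morphism P A u \<and> (\<forall>x\<in>carrier P. t (u x) = g x \<and> l (u x) = h x) \<and>
           (\<forall>u'. alg_morphism P A u' \<and> (\<forall>x\<in>carrier P. t (u' x) = g x \<and> l (u' x) = h x)
                 \<longrightarrow> (\<forall>x\<in>carrier P. u' x = u x))))"

definition is_pushout :: "'a gorder \<Rightarrow> 'b gorder \<Rightarrow> 'c gorder \<Rightarrow> 'd gorder \<Rightarrow>
   ('a \<Rightarrow> 'b) \<Rightarrow> ('a \<Rightarrow> 'c) \<Rightarrow> ('b \<Rightarrow> 'd) \<Rightarrow> ('c \<Rightarrow> 'd) \<Rightarrow> 'q itself \<Rightarrow> bool" where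
  "is_pushout A B C D t l r b (_ :: 'q itself) \<longleftrightarrow>
     (\<forall>x\<in>carrier A. r (t x) = b (l x)) \<and>
     (\<forall>(Q :: 'q gorder) g h. alg_morphism B Q g \<and> alg_morphism C Q h \<and>
        (\<forall>x\<in>carrier A. g (t x) = h (l x)) \<longrightarrow>
        (\<exists>v. alg_morphism D Q v \<and> (\<forall>y\<in>carrier B. v (r y) = g y) \<and> (\<forall>z\<in>carrier C. v (b z) = h z) \<and>
           (\<forall>v'. alg_morphism D Q v' \<and> (\<forall>y\<in>carrier B. v' (r y) = g y) \<and> (\<forall>z\<in>carrier C. v' (b z) = h z)
                 \<longrightarrow> (\<forall>w\<in>carrier D. v' w = v w))))"

end

theory Submission
  imports Defs
begin


lemma sup_eqI:
  assumes "complete_lattice X" "A \<subseteq> carrier X" "s \<in> carrier X"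
    "\<And>a. a \<in> A \<Longrightarrow> a \<sqsubseteq>\<^bsub>X\<^esub> s"
    "\<And>z. z \<in> carrier X \<Longrightarrow> (\<And>a. a \<in> A \<Longrightarrow> a \<sqsubseteq>\<^bsub>X\<^esub> z) \<Longrightarrow> s \<sqsubseteq>\<^bsub>X\<^esub> z"
  shows "\<Squnion>\<^bsub>X\<^esub> A = s"
proof -
  interpret X: complete_lattice X by fact
  show ?thesis
  proof (rule X.le_antisym)
    show "\<Squnion>\<^bsub>X\<^esub> A \<sqsubseteq>\<^bsub>X\<^esub> s" using assms(2,3,4) by (rule X.sup_least)
    show "s \<sqsubseteq>\<^bsub>X\<^esub> \<Squnion>\<^bsub>X\<^esub> A"
      by (rule assms(5)) (use assms(2) in \<open>auto intro: X.sup_upper\<close>)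
  qed (use assms(2,3) in auto)
qed

lemma join_eq_right:
  assumes "complete_lattice X" "x \<in> carrier X" "y \<in> carrier X" "x \<sqsubseteq>\<^bsub>X\<^esub> y"
  shows "x \<squnion>\<^bsub>X\<^esub> y = y"
proof -
  interpret X: complete_lattice X by fact
  show ?thesis unfolding join_def
    by (rule sup_eqI) (use assms in \<open>auto intro: X.le_refl\<close>)
qed

lemma join_eq_left:
  assumes "complete_lattice X" "x \<in> carrier X" "y \<in> carrier X" "y \<sqsubseteq>\<^bsub>X\<^esub> x"
  shows "x \<squnion>\<^bsub>X\<^esub> y = x"
proof -
  interpret X: complete_lattice X by fact
  show ?thesis unfolding join_def
    by (rule sup_eqI) (use assms in \<open>auto intro: X.le_refl\<close>)
qed

lemma upset_carrier: "carrier (upset L a) = {y \<in> carrier L. a \<sqsubseteq>\<^bsub>L\<^esub> y}"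
  by (simp add: upset_def)

lemma upset_le [simp]: "le (upset L a) = le L"
  by (simp add: upset_def)

lemma upset_cl:
  assumes "complete_lattice L" "a \<in> carrier L"
  shows "complete_lattice (upset L a)"
proof -
  interpret L: complete_lattice L by fact
  interpret U: partial_order "upset L a"
  proof -
    have "weak_partial_order (upset L a)"
      unfolding upset_def
      by (rule weak_partial_order_subset) (auto simp: L.weak_partial_order_axioms)
    then show "partial_order (upset L a)"
      by (rule partial_order.intro) (unfold_locales, simp add: upset_def L.eq_is_equal)
  qed
  show ?thesis
  proof (rule U.complete_latticeI)
    fix A assume A: "A \<subseteq> carrier (upset L a)"
    show "\<exists>s. least (upset L a) s (Upper (upset L a) A)"
    proof (cases "A = {}")
      case True
      then show ?thesis
        by (rule_tac x=a in exI) (auto simp: least_def Upper_def upset_carrier assms L.le_refl)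
    next
      case False
      have AL: "A \<subseteq> carrier L" using A by (auto simp: upset_carrier)
      then obtain x where x: "x \<in> A" using False by auto
      then have xL: "x \<in> carrier L" "a \<sqsubseteq>\<^bsub>L\<^esub> x" using A by (auto simp: upset_carrier)
      have "x \<sqsubseteq>\<^bsub>L\<^esub> \<Squnion>\<^bsub>L\<^esub> A" using L.sup_upper[OF AL x] .
      then have "a \<sqsubseteq>\<^bsub>L\<^esub> \<Squnion>\<^bsub>L\<^esub> A"
        using L.le_trans[OF xL(2)] xL(1) AL assms(2) by simp
      show ?thesis
      proof (rule exI[of _ "\<Squnion>\<^bsub>L\<^esub> A"], unfold least_def, intro conjI ballI)
        show "Upper (upset L a) A \<subseteq> carrier (upset L a)" by (auto simp: Upper_def)
        show "\<Squnion>\<^bsub>L\<^esub> A \<in> Upper (upset L a) A"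
          using AL L.sup_upper[OF AL] \<open>a \<sqsubseteq>\<^bsub>L\<^esub> \<Squnion>\<^bsub>L\<^esub> A\<close> by (auto simp: Upper_def upset_carrier)
        fix z assume "z \<in> Upper (upset L a) A"
        then have z: "z \<in> carrier L" "\<And>y. y \<in> A \<Longrightarrow> y \<sqsubseteq>\<^bsub>L\<^esub> z"
          using A by (auto simp: Upper_def upset_carrier)
        show "\<Squnion>\<^bsub>L\<^esub> A \<sqsubseteq>\<^bsub>upset L a\<^esub> z" using L.sup_least[OF AL z(1) z(2)] by simp
      qed
    qed
  next
    fix A assume A: "A \<subseteq> carrier (upset L a)"
    show "\<exists>s. greatest (upset L a) s (Lower (upset L a) A)"
    proof (cases "A = {}")
      case True
      then show ?thesis
        by (rule_tac x="\<top>\<^bsub>L\<^esub>" in exI) (auto simp: greatest_def Lower_def upset_carrier assms L.le_refl L.top_higher)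
    next
      case False
      have AL: "A \<subseteq> carrier L" using A by (auto simp: upset_carrier)
      have "a \<sqsubseteq>\<^bsub>L\<^esub> \<Sqinter>\<^bsub>L\<^esub> A"
        using A AL by (intro L.inf_greatest) (auto simp: upset_carrier assms)
      show ?thesis
      proof (rule exI[of _ "\<Sqinter>\<^bsub>L\<^esub> A"], unfold greatest_def, intro conjI ballI)
        show "Lower (upset L a) A \<subseteq> carrier (upset L a)" by (auto simp: Lower_def)
        show "\<Sqinter>\<^bsub>L\<^esub> A \<in> Lower (upset L a) A"
          using AL L.inf_lower[OF AL] \<open>a \<sqsubseteq>\<^bsub>L\<^esub> \<Sqinter>\<^bsub>L\<^esub> A\<close> by (auto simp: Lower_def upset_carrier)
        fix z assume "z \<in> Lower (upset L a) A"
        then have z: "z \<in> carrier L" "\<And>y. y \<in> A \<Longrightarrow> z \<sqsubseteq>\<^bsub>L\<^esub> y"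
          using A by (auto simp: Lower_def upset_carrier)
        show "z \<sqsubseteq>\<^bsub>upset L a\<^esub> \<Sqinter>\<^bsub>L\<^esub> A" using L.inf_greatest[OF AL z(1) z(2)] by simp
      qed
    qed
  qed
qed

lemma upset_sup_join:
  assumes "complete_lattice L" "a \<in> carrier L" "K \<subseteq> carrier L"
  shows "\<Squnion>\<^bsub>upset L a\<^esub> ((\<lambda>k. k \<squnion>\<^bsub>L\<^esub> a) ` K) = \<Squnion>\<^bsub>L\<^esub> K \<squnion>\<^bsub>L\<^esub> a"
proof -
  interpret L: complete_lattice L by fact
  have sK: "\<Squnion>\<^bsub>L\<^esub> K \<in> carrier L" using assms by simp
  show ?thesis
  proof (rule sup_eqI[OF upset_cl[OF assms(1,2)]])
    show "(\<lambda>k. k \<squnion>\<^bsub>L\<^esub> a) ` K \<subseteq> carrier (upset L a)"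
      using assms by (auto simp: upset_carrier intro: L.join_right)
    show "\<Squnion>\<^bsub>L\<^esub> K \<squnion>\<^bsub>L\<^esub> a \<in> carrier (upset L a)"
      using assms sK by (auto simp: upset_carrier intro: L.join_right)
  next
    fix b assume "b \<in> (\<lambda>k. k \<squnion>\<^bsub>L\<^esub> a) ` K"
    then obtain k where k: "k \<in> K" "b = k \<squnion>\<^bsub>L\<^esub> a" by auto
    have kL: "k \<in> carrier L" using k assms by auto
    have "k \<sqsubseteq>\<^bsub>L\<^esub> \<Squnion>\<^bsub>L\<^esub> K \<squnion>\<^bsub>L\<^esub> a"
      by (rule L.le_trans[OF L.sup_upper[OF assms(3) k(1)] L.join_left[OF sK assms(2)]])
        (use kL sK assms in simp_all)
    then show "b \<sqsubseteq>\<^bsub>upset L a\<^esub> \<Squnion>\<^bsub>L\<^esub> K \<squnion>\<^bsub>L\<^esub> a"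
      using k kL sK assms by (auto intro!: L.join_le L.join_right)
  next
    fix z assume z: "z \<in> carrier (upset L a)"
      and ub: "\<And>b. b \<in> (\<lambda>k. k \<squnion>\<^bsub>L\<^esub> a) ` K \<Longrightarrow> b \<sqsubseteq>\<^bsub>upset L a\<^esub> z"
    have zL: "z \<in> carrier L" "a \<sqsubseteq>\<^bsub>L\<^esub> z" using z by (auto simp: upset_carrier)
    have "\<Squnion>\<^bsub>L\<^esub> K \<sqsubseteq>\<^bsub>L\<^esub> z"
    proof (rule L.sup_least[OF assms(3) zL(1)])
      fix k assume k: "k \<in> K"
      then have kL: "k \<in> carrier L" using assms by auto
      have "k \<squnion>\<^bsub>L\<^esub> a \<sqsubseteq>\<^bsub>L\<^esub> z" using ub[of "k \<squnion>\<^bsub>L\<^esub> a"] k by auto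
      then show "k \<sqsubseteq>\<^bsub>L\<^esub> z"
        by (intro L.le_trans[OF L.join_left[OF kL assms(2)]]) (use kL zL assms in simp_all)
    qed
    then show "\<Squnion>\<^bsub>L\<^esub> K \<squnion>\<^bsub>L\<^esub> a \<sqsubseteq>\<^bsub>upset L a\<^esub> z"
      using zL sK assms by (auto intro!: L.join_le)
  qed
qed

lemma upset_sup_nonempty:
  assumes "complete_lattice L" "a \<in> carrier L" "A \<subseteq> carrier (upset L a)" "A \<noteq> {}"
  shows "\<Squnion>\<^bsub>upset L a\<^esub> A = \<Squnion>\<^bsub>L\<^esub> A"
proof -
  interpret L: complete_lattice L by fact
  have AL: "A \<subseteq> carrier L" using assms by (auto simp: upset_carrier)
  have "\<And>k. k \<in> A \<Longrightarrow> k \<squnion>\<^bsub>L\<^esub> a = k"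
    using assms(3) join_eq_left[OF assms(1) _ assms(2)] by (auto simp: upset_carrier)
  then have "(\<lambda>k. k \<squnion>\<^bsub>L\<^esub> a) ` A = (\<lambda>k. k) ` A" by (intro image_cong) auto
  then have eq: "(\<lambda>k. k \<squnion>\<^bsub>L\<^esub> a) ` A = A" by simp
  obtain x where x: "x \<in> A" using assms(4) by auto
  then have xL: "x \<in> carrier L" "a \<sqsubseteq>\<^bsub>L\<^esub> x" using assms(3) by (auto simp: upset_carrier)
  have "a \<sqsubseteq>\<^bsub>L\<^esub> \<Squnion>\<^bsub>L\<^esub> A"
    by (rule L.le_trans[OF xL(2) L.sup_upper[OF AL x]]) (use xL AL assms(2) in simp_all)
  then have "\<Squnion>\<^bsub>L\<^esub> A \<squnion>\<^bsub>L\<^esub> a = \<Squnion>\<^bsub>L\<^esub> A"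
    using AL assms by (intro join_eq_left) auto
  then show ?thesis using upset_sup_join[OF assms(1,2) AL] eq by simp
qed

lemma upset_sup_empty:
  assumes "complete_lattice L" "a \<in> carrier L"
  shows "\<Squnion>\<^bsub>upset L a\<^esub> {} = a"
proof -
  interpret L: complete_lattice L by fact
  show ?thesis
  by (rule sup_eqI[OF upset_cl[OF assms]]) (use assms in \<open>auto simp: upset_carrier\<close>)
qed

lemma sup_pres_join:
  assumes "sup_pres X Y f" "f \<in> carrier X \<rightarrow> carrier Y" "x \<in> carrier X" "y \<in> carrier X"
  shows "f (x \<squnion>\<^bsub>X\<^esub> y) = f x \<squnion>\<^bsub>Y\<^esub> f y"
proof -
  have "{x, y} \<subseteq> carrier X" using assms(3,4) by simp
  then have "f (\<Squnion>\<^bsub>X\<^esub> {x, y}) = \<Squnion>\<^bsub>Y\<^esub> (f ` {x, y})" using assms(1) unfolding sup_pres_def by blast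
  then show ?thesis unfolding join_def by simp
qed

lemma sup_pres_empty:
  assumes "sup_pres X Y f"
  shows "f (\<Squnion>\<^bsub>X\<^esub> {}) = \<Squnion>\<^bsub>Y\<^esub> {}"
proof -
  have "f (\<Squnion>\<^bsub>X\<^esub> {}) = \<Squnion>\<^bsub>Y\<^esub> (f ` {})" using assms(1) unfolding sup_pres_def by blast
  then show ?thesis by simp
qed

lemma sup_pres_mono:
  assumes "sup_pres X Y f" "f \<in> carrier X \<rightarrow> carrier Y" "x \<in> carrier X" "y \<in> carrier X"
    "x \<sqsubseteq>\<^bsub>X\<^esub> y"
  shows "f x \<sqsubseteq>\<^bsub>Y\<^esub> f y"
proof -
  have X: "complete_lattice X" and Y: "complete_lattice Y" using assms(1) by (auto simp: sup_pres_def)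
  interpret Y: complete_lattice Y by (fact Y)
  have "f y = f x \<squnion>\<^bsub>Y\<^esub> f y"
    using sup_pres_join[OF assms(1-4)] join_eq_right[OF X assms(3-5)] by simp
  moreover have "f x \<in> carrier Y" "f y \<in> carrier Y" using assms(2-4) by auto
  ultimately show ?thesis using Y.join_left[of "f x" "f y"] by simp
qed

lemma sup_pres_reflect:
  assumes "sup_pres X Y f" "f \<in> carrier X \<rightarrow> carrier Y" "inj_on f (carrier X)"
    "x \<in> carrier X" "y \<in> carrier X" "f x \<sqsubseteq>\<^bsub>Y\<^esub> f y"
  shows "x \<sqsubseteq>\<^bsub>X\<^esub> y"
proof -
  have X: "complete_lattice X" and Y: "complete_lattice Y" using assms(1) by (auto simp: sup_pres_def)
  interpret X: complete_lattice X by (fact X)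
  have "f (x \<squnion>\<^bsub>X\<^esub> y) = f y"
    using sup_pres_join[OF assms(1,2,4,5)] join_eq_right[OF Y _ _ assms(6)] assms(2,4,5) by auto
  then have "x \<squnion>\<^bsub>X\<^esub> y = y" using assms(3-5) by (auto dest: inj_onD)
  then show ?thesis using X.join_left[OF assms(4,5)] by simp
qed

lemma sup_mono_subset:
  assumes "complete_lattice L" "A \<subseteq> B" "B \<subseteq> carrier L"
  shows "\<Squnion>\<^bsub>L\<^esub> A \<sqsubseteq>\<^bsub>L\<^esub> \<Squnion>\<^bsub>L\<^esub> B"
proof -
  interpret L: complete_lattice L by fact
  show ?thesis using assms by (intro L.sup_least) (auto intro: L.sup_upper)
qed

lemma compact_carrier: "compact_elem L c \<Longrightarrow> c \<in> carrier L"
  by (simp add: compact_elem_def)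

lemma compact_sup_finite:
  assumes "complete_lattice L" "finite F" "F \<subseteq> {c. compact_elem L c}"
  shows "compact_elem L (\<Squnion>\<^bsub>L\<^esub> F)"
proof -
  interpret L: complete_lattice L by fact
  have FL: "F \<subseteq> carrier L" using assms(3) by (auto simp: compact_elem_def)
  show ?thesis unfolding compact_elem_def
  proof (intro conjI allI impI)
    show "\<Squnion>\<^bsub>L\<^esub> F \<in> carrier L" using FL by simp
    fix Y assume Y: "Y \<subseteq> carrier L" and le: "\<Squnion>\<^bsub>L\<^esub> F \<sqsubseteq>\<^bsub>L\<^esub> \<Squnion>\<^bsub>L\<^esub> Y"
    have "\<forall>c\<in>F. \<exists>G. finite G \<and> G \<subseteq> Y \<and> c \<sqsubseteq>\<^bsub>L\<^esub> \<Squnion>\<^bsub>L\<^esub> G"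
    proof
      fix c assume c: "c \<in> F"
      then have cc: "compact_elem L c" using assms(3) by auto
      have "c \<sqsubseteq>\<^bsub>L\<^esub> \<Squnion>\<^bsub>L\<^esub> Y"
        by (rule L.le_trans[OF L.sup_upper[OF FL c] le]) (use FL Y c in auto)
      then show "\<exists>G. finite G \<and> G \<subseteq> Y \<and> c \<sqsubseteq>\<^bsub>L\<^esub> \<Squnion>\<^bsub>L\<^esub> G"
        using cc Y unfolding compact_elem_def by blast
    qed
    from bchoice[OF this] obtain Gf where
      Gf0: "\<forall>c\<in>F. finite (Gf c) \<and> Gf c \<subseteq> Y \<and> c \<sqsubseteq>\<^bsub>L\<^esub> \<Squnion>\<^bsub>L\<^esub> (Gf c)"
      by blast
    have Gf: "\<And>c. c \<in> F \<Longrightarrow> finite (Gf c) \<and> Gf c \<subseteq> Y \<and> c \<sqsubseteq>\<^bsub>L\<^esub> \<Squnion>\<^bsub>L\<^esub> (Gf c)"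
      using Gf0 by blast
    let ?G = "\<Union>(Gf ` F)"
    have G: "finite ?G" "?G \<subseteq> Y" using Gf assms(2) by auto
    have "\<Squnion>\<^bsub>L\<^esub> F \<sqsubseteq>\<^bsub>L\<^esub> \<Squnion>\<^bsub>L\<^esub> ?G"
    proof (rule L.sup_least[OF FL])
      show "\<Squnion>\<^bsub>L\<^esub> ?G \<in> carrier L" using G Y by auto
      fix c assume c: "c \<in> F"
      have h: "\<Squnion>\<^bsub>L\<^esub> (Gf c) \<sqsubseteq>\<^bsub>L\<^esub> \<Squnion>\<^bsub>L\<^esub> ?G"
        using c G Y by (intro sup_mono_subset[OF assms(1)]) auto
      show "c \<sqsubseteq>\<^bsub>L\<^esub> \<Squnion>\<^bsub>L\<^esub> ?G"
        by (rule L.le_trans[OF conjunct2[OF conjunct2[OF Gf[OF c]]] h])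
          (use Gf[OF c] c FL G Y in auto)
    qed
    then show "\<exists>G. finite G \<and> G \<subseteq> Y \<and> \<Squnion>\<^bsub>L\<^esub> F \<sqsubseteq>\<^bsub>L\<^esub> \<Squnion>\<^bsub>L\<^esub> G"
      using G by blast
  qed
qed

lemma compact_upset:
  assumes "complete_lattice L" "compact_elem L k" "a \<in> carrier L"
  shows "compact_elem (upset L a) (k \<squnion>\<^bsub>L\<^esub> a)"
proof -
  interpret L: complete_lattice L by fact
  interpret U: complete_lattice "upset L a" by (rule upset_cl[OF assms(1,3)])
  have kL: "k \<in> carrier L" using assms(2) by (simp add: compact_elem_def)
  show ?thesis unfolding compact_elem_def
  proof (intro conjI allI impI)
    show "k \<squnion>\<^bsub>L\<^esub> a \<in> carrier (upset L a)"
      using kL assms by (auto simp: upset_carrier intro: L.join_right)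
    fix Y assume Y: "Y \<subseteq> carrier (upset L a)"
      and le: "k \<squnion>\<^bsub>L\<^esub> a \<sqsubseteq>\<^bsub>upset L a\<^esub> \<Squnion>\<^bsub>upset L a\<^esub> Y"
    show "\<exists>F. finite F \<and> F \<subseteq> Y \<and> k \<squnion>\<^bsub>L\<^esub> a \<sqsubseteq>\<^bsub>upset L a\<^esub> \<Squnion>\<^bsub>upset L a\<^esub> F"
    proof (cases "Y = {}")
      case True then show ?thesis using le by (intro exI[of _ "{}"]) simp
    next
      case False
      have YL: "Y \<subseteq> carrier L" using Y by (auto simp: upset_carrier)
      have h1: "k \<squnion>\<^bsub>L\<^esub> a \<sqsubseteq>\<^bsub>L\<^esub> \<Squnion>\<^bsub>L\<^esub> Y"
        using le upset_sup_nonempty[OF assms(1,3) Y False] by simp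
      have "k \<sqsubseteq>\<^bsub>L\<^esub> \<Squnion>\<^bsub>L\<^esub> Y"
        by (rule L.le_trans[OF L.join_left[OF kL assms(3)] h1]) (use kL assms YL in simp_all)
      then obtain F where F: "finite F" "F \<subseteq> Y" "k \<sqsubseteq>\<^bsub>L\<^esub> \<Squnion>\<^bsub>L\<^esub> F"
        using assms(2) YL unfolding compact_elem_def by blast
      have FU: "F \<subseteq> carrier (upset L a)" using F Y by auto
      have sU: "\<Squnion>\<^bsub>upset L a\<^esub> F \<in> carrier (upset L a)" using FU by simp
      then have sUL: "\<Squnion>\<^bsub>upset L a\<^esub> F \<in> carrier L" "a \<sqsubseteq>\<^bsub>L\<^esub> \<Squnion>\<^bsub>upset L a\<^esub> F"
        by (auto simp: upset_carrier)
      have FL: "F \<subseteq> carrier L" using FU by (auto simp: upset_carrier)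
      have h2: "\<Squnion>\<^bsub>L\<^esub> F \<sqsubseteq>\<^bsub>L\<^esub> \<Squnion>\<^bsub>upset L a\<^esub> F"
        using U.sup_upper[OF FU] by (intro L.sup_least[OF FL sUL(1)]) auto
      have "k \<sqsubseteq>\<^bsub>L\<^esub> \<Squnion>\<^bsub>upset L a\<^esub> F"
        by (rule L.le_trans[OF F(3) h2]) (use kL FL sUL in simp_all)
      then have "k \<squnion>\<^bsub>L\<^esub> a \<sqsubseteq>\<^bsub>L\<^esub> \<Squnion>\<^bsub>upset L a\<^esub> F"
        using sUL kL assms by (intro L.join_le) auto
      then show ?thesis using F by auto
    qed
  qed
qed

lemma compact_upset_repr:
  assumes "algebraic_lattice L" "a \<in> carrier L" "compact_elem (upset L a) c"
  shows "\<exists>F. finite F \<and> F \<subseteq> {c. compact_elem L c} \<and> c = \<Squnion>\<^bsub>L\<^esub> F \<squnion>\<^bsub>L\<^esub> a"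
proof -
  have cl: "complete_lattice L" using assms(1) by (simp add: algebraic_lattice_def)
  interpret L: complete_lattice L by fact
  interpret U: complete_lattice "upset L a" by (rule upset_cl[OF cl assms(2)])
  have cU: "c \<in> carrier (upset L a)" using assms(3) by (simp add: compact_elem_def)
  then have cL: "c \<in> carrier L" "a \<sqsubseteq>\<^bsub>L\<^esub> c" by (auto simp: upset_carrier)
  obtain K where K: "K \<subseteq> {c. compact_elem L c}" "c = \<Squnion>\<^bsub>L\<^esub> K"
    using assms(1) cL by (auto simp: algebraic_lattice_def)
  have KL: "K \<subseteq> carrier L" using K by (auto simp: compact_elem_def)
  let ?Y = "(\<lambda>k. k \<squnion>\<^bsub>L\<^esub> a) ` K"
  have YU: "?Y \<subseteq> carrier (upset L a)"
    using KL assms(2) by (auto simp: upset_carrier intro: L.join_right)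
  have cY: "c = \<Squnion>\<^bsub>upset L a\<^esub> ?Y"
    using upset_sup_join[OF cl assms(2) KL] K(2) join_eq_left[OF cl cL(1) assms(2) cL(2)] by simp
  have "c \<sqsubseteq>\<^bsub>upset L a\<^esub> \<Squnion>\<^bsub>upset L a\<^esub> ?Y"
    using U.le_refl[OF cU] by (simp only: cY[symmetric])
  then obtain G where G: "finite G" "G \<subseteq> ?Y" "c \<sqsubseteq>\<^bsub>upset L a\<^esub> \<Squnion>\<^bsub>upset L a\<^esub> G"
    using assms(3) YU unfolding compact_elem_def by blast
  obtain F where F: "F \<subseteq> K" "finite F" "G = (\<lambda>k. k \<squnion>\<^bsub>L\<^esub> a) ` F"
    using finite_subset_image[OF G(1,2)] by blast
  have FL: "F \<subseteq> carrier L" using F KL by auto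
  have GF: "\<Squnion>\<^bsub>upset L a\<^esub> G = \<Squnion>\<^bsub>L\<^esub> F \<squnion>\<^bsub>L\<^esub> a"
    using upset_sup_join[OF cl assms(2) FL] F(3) by simp
  have "\<Squnion>\<^bsub>upset L a\<^esub> G \<sqsubseteq>\<^bsub>upset L a\<^esub> c"
    using sup_mono_subset[OF U.complete_lattice_axioms G(2) YU] cY by simp
  then have "c = \<Squnion>\<^bsub>upset L a\<^esub> G"
    using G(3) YU G(2) cU by (intro U.le_antisym) auto
  then show ?thesis using F K GF by blast
qed

lemma algebraic_upset:
  assumes "algebraic_lattice L" "a \<in> carrier L"
  shows "algebraic_lattice (upset L a)"
proof -
  have cl: "complete_lattice L" using assms(1) by (simp add: algebraic_lattice_def)
  interpret L: complete_lattice L by fact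
  show ?thesis unfolding algebraic_lattice_def
  proof (intro conjI ballI)
    show "complete_lattice (upset L a)" by (rule upset_cl[OF cl assms(2)])
    fix x assume xU: "x \<in> carrier (upset L a)"
    then have xL: "x \<in> carrier L" "a \<sqsubseteq>\<^bsub>L\<^esub> x" by (auto simp: upset_carrier)
    obtain K where K: "K \<subseteq> {c. compact_elem L c}" "x = \<Squnion>\<^bsub>L\<^esub> K"
      using assms(1) xL by (auto simp: algebraic_lattice_def)
    have KL: "K \<subseteq> carrier L" using K by (auto simp: compact_elem_def)
    let ?Y = "(\<lambda>k. k \<squnion>\<^bsub>L\<^esub> a) ` K"
    have "x = \<Squnion>\<^bsub>upset L a\<^esub> ?Y"
      using upset_sup_join[OF cl assms(2) KL] K(2) join_eq_left[OF cl xL(1) assms(2) xL(2)] by simp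
    moreover have "?Y \<subseteq> {c. compact_elem (upset L a) c}"
      using K compact_upset[OF cl _ assms(2)] by auto
    ultimately show "\<exists>Y. Y \<subseteq> {c. compact_elem (upset L a) c} \<and> x = \<Squnion>\<^bsub>upset L a\<^esub> Y"
      by blast
  qed
qed

lemma alg_morphism_id:
  assumes "algebraic_lattice X"
  shows "alg_morphism X X id"
  using assms by (auto simp: alg_morphism_def sup_pres_def algebraic_lattice_def)

lemma normal_epi_upset:
  assumes "algebraic_lattice L" "a \<in> carrier L"
  shows "normal_epi L (upset L a) (\<lambda>x. x \<squnion>\<^bsub>L\<^esub> a)"
proof -
  have cl: "complete_lattice L" using assms(1) by (simp add: algebraic_lattice_def)
  interpret L: complete_lattice L by fact
  have alg: "algebraic_lattice (upset L a)" by (rule algebraic_upset[OF assms])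
  have mor: "alg_morphism L (upset L a) (\<lambda>x. x \<squnion>\<^bsub>L\<^esub> a)"
    unfolding alg_morphism_def
  proof (intro conjI allI impI)
    show "(\<lambda>x. x \<squnion>\<^bsub>L\<^esub> a) \<in> carrier L \<rightarrow> carrier (upset L a)"
      using assms(2) by (auto simp: upset_carrier intro: L.join_right)
    show "sup_pres L (upset L a) (\<lambda>x. x \<squnion>\<^bsub>L\<^esub> a)"
      unfolding sup_pres_def using cl upset_cl[OF cl assms(2)] upset_sup_join[OF cl assms(2)] by simp
    fix c assume "compact_elem L c"
    then show "compact_elem (upset L a) (c \<squnion>\<^bsub>L\<^esub> a)" by (rule compact_upset[OF cl _ assms(2)])
  qed (use assms alg in auto)
  have iso: "alg_iso (upset L a) (upset L a) id"
    unfolding alg_iso_def using alg_morphism_id[OF alg] by auto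
  have "\<exists>x0\<in>carrier L. \<exists>\<phi>. alg_iso (upset L x0) (upset L a) \<phi> \<and>
        (\<forall>y\<in>carrier L. y \<squnion>\<^bsub>L\<^esub> a = \<phi> (y \<squnion>\<^bsub>L\<^esub> x0))"
    by (rule bexI[of _ a], rule exI[of _ id]) (use iso assms(2) in simp_all)
  then show ?thesis unfolding normal_epi_def using mor by blast
qed

lemma normal_mono_compact_reflect:
  assumes "normal_mono M N i" "m \<in> carrier M" "compact_elem N (i m)"
  shows "compact_elem M m"
proof -
  have sp: "sup_pres M N i" and fi: "i \<in> carrier M \<rightarrow> carrier N" and inj: "inj_on i (carrier M)"
    using assms(1) by (auto simp: normal_mono_def alg_morphism_def)
  have clM: "complete_lattice M" and clN: "complete_lattice N" using sp by (auto simp: sup_pres_def)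
  interpret M: complete_lattice M by fact
  interpret N: complete_lattice N by fact
  show ?thesis unfolding compact_elem_def
  proof (intro conjI allI impI)
    show "m \<in> carrier M" by fact
    fix Y assume Y: "Y \<subseteq> carrier M" and le: "m \<sqsubseteq>\<^bsub>M\<^esub> \<Squnion>\<^bsub>M\<^esub> Y"
    have "i m \<sqsubseteq>\<^bsub>N\<^esub> i (\<Squnion>\<^bsub>M\<^esub> Y)"
      using sup_pres_mono[OF sp fi assms(2) _ le] Y by simp
    then have "i m \<sqsubseteq>\<^bsub>N\<^esub> \<Squnion>\<^bsub>N\<^esub> (i ` Y)" using sp Y by (simp add: sup_pres_def)
    moreover have "i ` Y \<subseteq> carrier N" using fi Y by auto
    ultimately obtain G where G: "finite G" "G \<subseteq> i ` Y" "i m \<sqsubseteq>\<^bsub>N\<^esub> \<Squnion>\<^bsub>N\<^esub> G"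
      using assms(3) by (auto simp: compact_elem_def)
    obtain F where F: "F \<subseteq> Y" "finite F" "G = i ` F"
      using finite_subset_image[OF G(1,2)] by blast
    have FM: "F \<subseteq> carrier M" using F Y by auto
    have "i (\<Squnion>\<^bsub>M\<^esub> F) = \<Squnion>\<^bsub>N\<^esub> G" using sp FM F(3) by (simp add: sup_pres_def)
    then have "m \<sqsubseteq>\<^bsub>M\<^esub> \<Squnion>\<^bsub>M\<^esub> F"
      using sup_pres_reflect[OF sp fi inj assms(2) _ ] G(3) FM by simp
    then show "\<exists>F. finite F \<and> F \<subseteq> Y \<and> m \<sqsubseteq>\<^bsub>M\<^esub> \<Squnion>\<^bsub>M\<^esub> F" using F by blast
  qed
qed

lemma normal_mono_upset:
  assumes "normal_mono M N i" "e \<in> carrier M"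
  shows "normal_mono (upset M e) (upset N (i e)) i"
proof -
  have sp: "sup_pres M N i" and fi: "i \<in> carrier M \<rightarrow> carrier N" and inj: "inj_on i (carrier M)"
    and algM: "algebraic_lattice M" and algN: "algebraic_lattice N"
    and cp: "\<And>c. compact_elem M c \<Longrightarrow> compact_elem N (i c)"
    and dc: "\<And>y x. y \<in> carrier N \<Longrightarrow> x \<in> carrier M \<Longrightarrow> y \<sqsubseteq>\<^bsub>N\<^esub> i x \<Longrightarrow> y \<in> i ` carrier M"
    using assms(1) by (auto simp: normal_mono_def alg_morphism_def)
  have clM: "complete_lattice M" and clN: "complete_lattice N" using sp by (auto simp: sup_pres_def)
  interpret M: complete_lattice M by fact
  interpret N: complete_lattice N by fact
  have io: "i e \<in> carrier N" using fi assms(2) by auto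
  have fiU: "i \<in> carrier (upset M e) \<rightarrow> carrier (upset N (i e))"
    using sup_pres_mono[OF sp fi assms(2)] fi by (auto simp: upset_carrier)
  have mor: "alg_morphism (upset M e) (upset N (i e)) i"
    unfolding alg_morphism_def
  proof (intro conjI allI impI)
    show "algebraic_lattice (upset M e)" by (rule algebraic_upset[OF algM assms(2)])
    show "algebraic_lattice (upset N (i e))" by (rule algebraic_upset[OF algN io])
    show "i \<in> carrier (upset M e) \<rightarrow> carrier (upset N (i e))" by fact
    show "sup_pres (upset M e) (upset N (i e)) i"
      unfolding sup_pres_def
    proof (intro conjI allI impI)
      show "complete_lattice (upset M e)" by (rule upset_cl[OF clM assms(2)])
      show "complete_lattice (upset N (i e))" by (rule upset_cl[OF clN io])
      fix A assume A: "A \<subseteq> carrier (upset M e)"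
      show "i (\<Squnion>\<^bsub>upset M e\<^esub> A) = \<Squnion>\<^bsub>upset N (i e)\<^esub> (i ` A)"
      proof (cases "A = {}")
        case True then show ?thesis using upset_sup_empty[OF clM assms(2)] upset_sup_empty[OF clN io] by simp
      next
        case False
        have iA: "i ` A \<subseteq> carrier (upset N (i e))" using A fiU by auto
        have AM: "A \<subseteq> carrier M" using A by (auto simp: upset_carrier)
        show ?thesis
          using upset_sup_nonempty[OF clM assms(2) A False] upset_sup_nonempty[OF clN io iA] False
            sp AM by (simp add: sup_pres_def)
      qed
    qed
  next
    fix c assume c: "compact_elem (upset M e) c"
    obtain F where F: "finite F" "F \<subseteq> {c. compact_elem M c}" "c = \<Squnion>\<^bsub>M\<^esub> F \<squnion>\<^bsub>M\<^esub> e"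
      using compact_upset_repr[OF algM assms(2) c] by blast
    have FM: "F \<subseteq> carrier M" using F by (auto simp: compact_elem_def)
    have "compact_elem M (\<Squnion>\<^bsub>M\<^esub> F)" by (rule compact_sup_finite[OF clM F(1,2)])
    then have "compact_elem N (i (\<Squnion>\<^bsub>M\<^esub> F))" by (rule cp)
    then have "compact_elem (upset N (i e)) (i (\<Squnion>\<^bsub>M\<^esub> F) \<squnion>\<^bsub>N\<^esub> i e)"
      by (rule compact_upset[OF clN _ io])
    moreover have "i c = i (\<Squnion>\<^bsub>M\<^esub> F) \<squnion>\<^bsub>N\<^esub> i e"
      using F(3) sup_pres_join[OF sp fi _ assms(2)] FM by simp
    ultimately show "compact_elem (upset N (i e)) (i c)" by simp
  qed
  show ?thesis unfolding normal_mono_def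
  proof (intro conjI ballI impI)
    show "inj_on i (carrier (upset M e))" using inj by (rule inj_on_subset) (auto simp: upset_carrier)
    fix y x assume y: "y \<in> carrier (upset N (i e))" and x: "x \<in> carrier (upset M e)"
      and le: "y \<sqsubseteq>\<^bsub>upset N (i e)\<^esub> i x"
    have yN: "y \<in> carrier N" "i e \<sqsubseteq>\<^bsub>N\<^esub> y" using y by (auto simp: upset_carrier)
    have xM: "x \<in> carrier M" using x by (auto simp: upset_carrier)
    obtain m where m: "m \<in> carrier M" "y = i m" using dc[OF yN(1) xM] le by auto
    have "e \<sqsubseteq>\<^bsub>M\<^esub> m" using sup_pres_reflect[OF sp fi inj assms(2) m(1)] yN m by simp
    then show "y \<in> i ` carrier (upset M e)" using m by (auto simp: upset_carrier)
  qed (rule mor)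
qed

lemma pullback_upset:
  assumes "normal_mono M N i" "e \<in> carrier M"
  shows "is_pullback M N (upset M e) (upset N (i e)) i (\<lambda>x. x \<squnion>\<^bsub>M\<^esub> e) (\<lambda>y. y \<squnion>\<^bsub>N\<^esub> i e) i TYPE('p)"
proof -
  have sp: "sup_pres M N i" and fi: "i \<in> carrier M \<rightarrow> carrier N" and inj: "inj_on i (carrier M)"
    and algM: "algebraic_lattice M" and algN: "algebraic_lattice N"
    and dc: "\<And>y x. y \<in> carrier N \<Longrightarrow> x \<in> carrier M \<Longrightarrow> y \<sqsubseteq>\<^bsub>N\<^esub> i x \<Longrightarrow> y \<in> i ` carrier M"
    using assms(1) by (auto simp: normal_mono_def alg_morphism_def)
  have clM: "complete_lattice M" and clN: "complete_lattice N" using sp by (auto simp: sup_pres_def)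
  interpret M: complete_lattice M by fact
  interpret N: complete_lattice N by fact
  have io: "i e \<in> carrier N" using fi assms(2) by auto
  have comm: "\<forall>x\<in>carrier M. i x \<squnion>\<^bsub>N\<^esub> i e = i (x \<squnion>\<^bsub>M\<^esub> e)"
    using sup_pres_join[OF sp fi _ assms(2)] by simp
  show ?thesis unfolding is_pullback_def
  proof (intro conjI allI impI)
    show "\<forall>x\<in>carrier M. i x \<squnion>\<^bsub>N\<^esub> i e = i (x \<squnion>\<^bsub>M\<^esub> e)" by (rule comm)
    fix P :: "'p gorder" and g h
    assume H: "alg_morphism P N g \<and> alg_morphism P (upset M e) h \<and>
      (\<forall>x\<in>carrier P. g x \<squnion>\<^bsub>N\<^esub> i e = i (h x))"
    have gm: "alg_morphism P N g" and hm: "alg_morphism P (upset M e) h"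
      and gh: "\<And>x. x \<in> carrier P \<Longrightarrow> g x \<squnion>\<^bsub>N\<^esub> i e = i (h x)" using H by auto
    have gsp: "sup_pres P N g" and gf: "g \<in> carrier P \<rightarrow> carrier N" and algP: "algebraic_lattice P"
      and gc: "\<And>c. compact_elem P c \<Longrightarrow> compact_elem N (g c)"
      using gm by (auto simp: alg_morphism_def)
    have hf: "h \<in> carrier P \<rightarrow> carrier (upset M e)" using hm by (auto simp: alg_morphism_def)
    have clP: "complete_lattice P" using gsp by (auto simp: sup_pres_def)
    interpret P: complete_lattice P by fact
    have hM: "\<And>x. x \<in> carrier P \<Longrightarrow> h x \<in> carrier M" using hf by (auto simp: upset_carrier)
    have gim: "\<And>x. x \<in> carrier P \<Longrightarrow> g x \<in> i ` carrier M"
    proof -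
      fix x assume x: "x \<in> carrier P"
      have "g x \<sqsubseteq>\<^bsub>N\<^esub> i (h x)" using gh[OF x] N.join_left[OF _ io, of "g x"] gf x by auto
      then show "g x \<in> i ` carrier M" using dc gf x hM by blast
    qed
    define u where "u = (\<lambda>x. the_inv_into (carrier M) i (g x))"
    have uM: "\<And>x. x \<in> carrier P \<Longrightarrow> u x \<in> carrier M"
      unfolding u_def using gim inj by (auto intro: the_inv_into_into)
    have iu: "\<And>x. x \<in> carrier P \<Longrightarrow> i (u x) = g x"
      unfolding u_def using gim inj by (auto intro: f_the_inv_into_f)
    have uh: "\<And>x. x \<in> carrier P \<Longrightarrow> u x \<squnion>\<^bsub>M\<^esub> e = h x"
    proof -
      fix x assume x: "x \<in> carrier P"
      have "i (u x \<squnion>\<^bsub>M\<^esub> e) = i (h x)" using comm uM[OF x] iu[OF x] gh[OF x] by auto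
      then show "u x \<squnion>\<^bsub>M\<^esub> e = h x" using inj uM[OF x] hM[OF x] assms(2) by (auto dest: inj_onD)
    qed
    have um: "alg_morphism P M u"
      unfolding alg_morphism_def
    proof (intro conjI allI impI)
      show "sup_pres P M u" unfolding sup_pres_def
      proof (intro conjI allI impI)
        fix A assume A: "A \<subseteq> carrier P"
        have uA: "u ` A \<subseteq> carrier M" using A uM by auto
        have "i (u (\<Squnion>\<^bsub>P\<^esub> A)) = \<Squnion>\<^bsub>N\<^esub> (g ` A)" using iu[of "\<Squnion>\<^bsub>P\<^esub> A"] A gsp by (simp add: sup_pres_def)
        moreover have "i (\<Squnion>\<^bsub>M\<^esub> (u ` A)) = \<Squnion>\<^bsub>N\<^esub> (g ` A)"
        proof -
          have "i (\<Squnion>\<^bsub>M\<^esub> (u ` A)) = \<Squnion>\<^bsub>N\<^esub> (i ` u ` A)" using sp uA by (simp add: sup_pres_def)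
          also have "i ` u ` A = g ` A" unfolding image_image by (rule image_cong) (use A iu in auto)
          finally show ?thesis .
        qed
        ultimately show "u (\<Squnion>\<^bsub>P\<^esub> A) = \<Squnion>\<^bsub>M\<^esub> (u ` A)"
          using uM[of "\<Squnion>\<^bsub>P\<^esub> A"] A uA M.sup_closed[OF uA] P.sup_closed[OF A]
          by (intro inj_onD[OF inj]) simp_all
      qed (use clP clM in auto)
    next
      fix c assume c: "compact_elem P c"
      have cP: "c \<in> carrier P" using c by (simp add: compact_elem_def)
      show "compact_elem M (u c)"
        using normal_mono_compact_reflect[OF assms(1) uM[OF cP]] gc[OF c] iu[OF cP] by simp
    qed (use algP algM uM in auto)
    show "\<exists>u. alg_morphism P M u \<and> (\<forall>x\<in>carrier P. i (u x) = g x \<and> u x \<squnion>\<^bsub>M\<^esub> e = h x) \<and>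
           (\<forall>u'. alg_morphism P M u' \<and> (\<forall>x\<in>carrier P. i (u' x) = g x \<and> u' x \<squnion>\<^bsub>M\<^esub> e = h x) \<longrightarrow>
                 (\<forall>x\<in>carrier P. u' x = u x))"
    proof (intro exI conjI allI impI ballI)
      show "alg_morphism P M u" by (rule um)
      fix x assume x: "x \<in> carrier P"
      show "i (u x) = g x" using iu[OF x] .
      show "u x \<squnion>\<^bsub>M\<^esub> e = h x" using uh[OF x] .
    next
      fix u' x assume u': "alg_morphism P M u' \<and> (\<forall>x\<in>carrier P. i (u' x) = g x \<and> u' x \<squnion>\<^bsub>M\<^esub> e = h x)"
        and x: "x \<in> carrier P"
      have "u' x \<in> carrier M" using u' x by (auto simp: alg_morphism_def)
      then show "u' x = u x" using u' x iu[OF x] uM[OF x] by (intro inj_onD[OF inj]) auto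
    qed
  qed
qed

lemma pushout_upset:
  assumes "normal_mono M N i" "e \<in> carrier M"
  shows "is_pushout M N (upset M e) (upset N (i e)) i (\<lambda>x. x \<squnion>\<^bsub>M\<^esub> e) (\<lambda>y. y \<squnion>\<^bsub>N\<^esub> i e) i TYPE('q)"
proof -
  have sp: "sup_pres M N i" and fi: "i \<in> carrier M \<rightarrow> carrier N" and inj: "inj_on i (carrier M)"
    and algM: "algebraic_lattice M" and algN: "algebraic_lattice N"
    using assms(1) by (auto simp: normal_mono_def alg_morphism_def)
  have clM: "complete_lattice M" and clN: "complete_lattice N" using sp by (auto simp: sup_pres_def)
  interpret M: complete_lattice M by fact
  interpret N: complete_lattice N by fact
  have io: "i e \<in> carrier N" using fi assms(2) by auto
  have comm: "\<forall>x\<in>carrier M. i x \<squnion>\<^bsub>N\<^esub> i e = i (x \<squnion>\<^bsub>M\<^esub> e)"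
    using sup_pres_join[OF sp fi _ assms(2)] by simp
  show ?thesis unfolding is_pushout_def
  proof (intro conjI allI impI)
    show "\<forall>x\<in>carrier M. i x \<squnion>\<^bsub>N\<^esub> i e = i (x \<squnion>\<^bsub>M\<^esub> e)" by (rule comm)
    fix Q :: "'q gorder" and g h
    assume H: "alg_morphism N Q g \<and> alg_morphism (upset M e) Q h \<and>
      (\<forall>x\<in>carrier M. g (i x) = h (x \<squnion>\<^bsub>M\<^esub> e))"
    have gm: "alg_morphism N Q g" and hm: "alg_morphism (upset M e) Q h"
      and gh: "\<And>x. x \<in> carrier M \<Longrightarrow> g (i x) = h (x \<squnion>\<^bsub>M\<^esub> e)" using H by auto
    have gsp: "sup_pres N Q g" and gf: "g \<in> carrier N \<rightarrow> carrier Q" and algQ: "algebraic_lattice Q"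
      and gc: "\<And>c. compact_elem N c \<Longrightarrow> compact_elem Q (g c)"
      using gm by (auto simp: alg_morphism_def)
    have clQ: "complete_lattice Q" using gsp by (auto simp: sup_pres_def)
    interpret Q: complete_lattice Q by fact
    have bM: "\<Squnion>\<^bsub>M\<^esub> {} \<in> carrier M" by simp
    have ee: "e \<squnion>\<^bsub>M\<^esub> e = e" using join_eq_left[OF clM assms(2) assms(2)] assms(2) by simp
    have be: "\<Squnion>\<^bsub>M\<^esub> {} \<squnion>\<^bsub>M\<^esub> e = e"
      by (rule join_eq_right[OF clM bM assms(2)]) (rule M.sup_least, use assms(2) in auto)
    have key: "g (i e) = \<Squnion>\<^bsub>Q\<^esub> {}"
    proof -
      have "g (i e) = h e" using gh[OF assms(2)] ee by simp
      also have "\<dots> = g (i (\<Squnion>\<^bsub>M\<^esub> {}))" using gh[OF bM] be by simp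
      also have "\<dots> = \<Squnion>\<^bsub>Q\<^esub> {}" using sup_pres_empty[OF sp] sup_pres_empty[OF gsp] by simp
      finally show ?thesis .
    qed
    have gy: "\<And>y. y \<in> carrier N \<Longrightarrow> g (y \<squnion>\<^bsub>N\<^esub> i e) = g y"
    proof -
      fix y assume y: "y \<in> carrier N"
      have gyQ: "g y \<in> carrier Q" using gf y by auto
      have "g (y \<squnion>\<^bsub>N\<^esub> i e) = g y \<squnion>\<^bsub>Q\<^esub> \<Squnion>\<^bsub>Q\<^esub> {}"
        using sup_pres_join[OF gsp gf y io] key by simp
      also have "\<dots> = g y"
        by (rule join_eq_left[OF clQ gyQ]) (simp, rule Q.sup_least, use gyQ in auto)
      finally show "g (y \<squnion>\<^bsub>N\<^esub> i e) = g y" .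
    qed
    have vm: "alg_morphism (upset N (i e)) Q g"
      unfolding alg_morphism_def
    proof (intro conjI allI impI)
      show "algebraic_lattice (upset N (i e))" by (rule algebraic_upset[OF algN io])
      show "g \<in> carrier (upset N (i e)) \<rightarrow> carrier Q" using gf by (auto simp: upset_carrier)
      show "sup_pres (upset N (i e)) Q g"
        unfolding sup_pres_def
      proof (intro conjI allI impI)
        show "complete_lattice (upset N (i e))" by (rule upset_cl[OF clN io])
        fix A assume A: "A \<subseteq> carrier (upset N (i e))"
        show "g (\<Squnion>\<^bsub>upset N (i e)\<^esub> A) = \<Squnion>\<^bsub>Q\<^esub> (g ` A)"
        proof (cases "A = {}")
          case True then show ?thesis using upset_sup_empty[OF clN io] key by simp
        next
          case False
          have AN: "A \<subseteq> carrier N" using A by (auto simp: upset_carrier)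
          show ?thesis
            using upset_sup_nonempty[OF clN io A False] gsp AN by (simp add: sup_pres_def)
        qed
      qed (rule clQ)
    next
      fix c assume c: "compact_elem (upset N (i e)) c"
      obtain F where F: "finite F" "F \<subseteq> {c. compact_elem N c}" "c = \<Squnion>\<^bsub>N\<^esub> F \<squnion>\<^bsub>N\<^esub> i e"
        using compact_upset_repr[OF algN io c] by blast
      have FN: "F \<subseteq> carrier N" using F by (auto simp: compact_elem_def)
      have "compact_elem Q (g (\<Squnion>\<^bsub>N\<^esub> F))" by (rule gc[OF compact_sup_finite[OF clN F(1,2)]])
      then show "compact_elem Q (g c)" using F(3) gy[of "\<Squnion>\<^bsub>N\<^esub> F"] FN by simp
    qed (rule algQ)
    have hz: "\<And>z. z \<in> carrier (upset M e) \<Longrightarrow> g (i z) = h z"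
    proof -
      fix z assume z: "z \<in> carrier (upset M e)"
      then have zM: "z \<in> carrier M" "e \<sqsubseteq>\<^bsub>M\<^esub> z" by (auto simp: upset_carrier)
      show "g (i z) = h z" using gh[OF zM(1)] join_eq_left[OF clM zM(1) assms(2) zM(2)] by simp
    qed
    show "\<exists>v. alg_morphism (upset N (i e)) Q v \<and> (\<forall>y\<in>carrier N. v (y \<squnion>\<^bsub>N\<^esub> i e) = g y) \<and>
           (\<forall>z\<in>carrier (upset M e). v (i z) = h z) \<and>
           (\<forall>v'. alg_morphism (upset N (i e)) Q v' \<and> (\<forall>y\<in>carrier N. v' (y \<squnion>\<^bsub>N\<^esub> i e) = g y) \<and>
                 (\<forall>z\<in>carrier (upset M e). v' (i z) = h z) \<longrightarrow>
                 (\<forall>w\<in>carrier (upset N (i e)). v' w = v w))"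
    proof (intro exI conjI allI impI ballI)
      show "alg_morphism (upset N (i e)) Q g" by (rule vm)
      fix y assume "y \<in> carrier N" then show "g (y \<squnion>\<^bsub>N\<^esub> i e) = g y" by (rule gy)
    next
      fix z assume "z \<in> carrier (upset M e)" then show "g (i z) = h z" by (rule hz)
    next
      fix v' w assume v': "alg_morphism (upset N (i e)) Q v' \<and> (\<forall>y\<in>carrier N. v' (y \<squnion>\<^bsub>N\<^esub> i e) = g y) \<and>
                 (\<forall>z\<in>carrier (upset M e). v' (i z) = h z)"
        and w: "w \<in> carrier (upset N (i e))"
      then have wN: "w \<in> carrier N" "i e \<sqsubseteq>\<^bsub>N\<^esub> w" by (auto simp: upset_carrier)
      have "w \<squnion>\<^bsub>N\<^esub> i e = w" by (rule join_eq_left[OF clN wN(1) io wN(2)])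
      then show "v' w = g w" using v' wN(1) by (metis (no_types, lifting))
    qed
  qed
qed


theorem mainTheorem18:
  fixes M :: "'a gorder" and N :: "'b gorder" and i :: "'a \<Rightarrow> 'b" and L :: "'a set"
  assumes "normal_mono M N i"
    and "algebraic_sublattice L M"
  defines "oneL \<equiv> \<Squnion>\<^bsub>M\<lparr>carrier := L\<rparr>\<^esub> L"
  defines "ML \<equiv> upset M oneL" and "NL \<equiv> upset N (i oneL)"
  defines "\<pi> \<equiv> (\<lambda>x. x \<squnion>\<^bsub>M\<^esub> oneL)" and "\<pi>' \<equiv> (\<lambda>y. y \<squnion>\<^bsub>N\<^esub> i oneL)"
  shows "normal_epi M ML \<pi> \<and> normal_epi N NL \<pi>' \<and> normal_mono ML NL i \<and>
         is_pullback M N ML NL i \<pi> \<pi>' i TYPE('p) \<and>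
         is_pushout M N ML NL i \<pi> \<pi>' i TYPE('q)"
proof -
  have algM: "algebraic_lattice M" and algN: "algebraic_lattice N" and fi: "i \<in> carrier M \<rightarrow> carrier N"
    using assms(1) by (auto simp: normal_mono_def alg_morphism_def)
  have LM: "L \<subseteq> carrier M" and clL: "complete_lattice (M\<lparr>carrier := L\<rparr>)"
    using assms(2) by (auto simp: algebraic_sublattice_def algebraic_lattice_def)
  interpret Ls: complete_lattice "M\<lparr>carrier := L\<rparr>" by (rule clL)
  have "oneL \<in> carrier (M\<lparr>carrier := L\<rparr>)"
    unfolding oneL_def by (rule Ls.sup_closed) simp
  then have e: "oneL \<in> carrier M" using LM by auto
  have ie: "i oneL \<in> carrier N" using fi e by auto
  show ?thesis unfolding \<open>ML \<equiv> upset M oneL\<close> \<open>NL \<equiv> upset N (i oneL)\<close> \<pi>_def \<pi>'_def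
    using normal_epi_upset[OF algM e] normal_epi_upset[OF algN ie] normal_mono_upset[OF assms(1) e]
      pullback_upset[OF assms(1) e] pushout_upset[OF assms(1) e] by (intro conjI)
qed

end
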